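(* Let $\Gamma$ be the middle-third Cantor set. Then: (1) the set of all uniformly perfect metrics in $\mathrm{Met}(\Gamma)$ is a dense $F_\sigma$ subset of $(\mathrm{Met}(\Gamma),\mathcal{D}_\Gamma)$; (2) the set of all non-uniformly perfect metrics in $\mathrm{Met}(\Gamma)$ is a dense $G_\delta$ subset of $(\mathrm{Met}(\Gamma),\mathcal{D}_\Gamma)$.
   Context: For a metrizable space $X$, $\mathrm{Met}(X)$ is the set of all metrics on $X$ generating its topology, with the (possibly $\infty$-valued) metric $\mathcal{D}_X(d,e)=\sup_{x,y\in X}|d(x,y)-e(x,y)|$. For $c\in(0,1)$, a metric space $(X,d)$ is $c$-uniformly perfect if for every $x\in X$ and every $r\in(0,\delta_d(X))$ (where $\delta_d(X)$ is the diameter) there is $y\in X$ with $c r\le d(x,y)\le r$; it is uniformly perfect if it is $c$-uniformly perfect for some $c\in(0,1)$. $F_\sigma$: countable union of closed sets; $G_\delta$: countable intersection of open sets. *)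

theory Defs
  imports "HOL-Analysis.Analysis"
begin

definition cantor_set :: "real set" where
  "cantor_set = {(\<Sum>k. 2 * of_bool (b k) / 3 ^ Suc k) | b :: nat \<Rightarrow> bool. True}"

text \<open>A metric on X is
  represented as a function on the whole ambient type, normalised to be 0 off X \<times> X,
  so that each metric on X has exactly one representative.\<close>
definition Met :: "'a::topological_space set \<Rightarrow> ('a \<Rightarrow> 'a \<Rightarrow> real) set" where
  "Met X = {d. Metric_space X d
              \<and> Metric_space.mtopology X d = top_of_set X
              \<and> (\<forall>x y. x \<notin> X \<or> y \<notin> X \<longrightarrow> d x y = 0)}"

definition DX :: "'a set \<Rightarrow> ('a \<Rightarrow> 'a \<Rightarrow> real) \<Rightarrow> ('a \<Rightarrow> 'a \<Rightarrow> real) \<Rightarrow> ereal" where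
  "DX X d e = (SUP p \<in> X \<times> X. ereal \<bar>d (fst p) (snd p) - e (fst p) (snd p)\<bar>)"

definition Met_open :: "'a::topological_space set \<Rightarrow> ('a \<Rightarrow> 'a \<Rightarrow> real) set \<Rightarrow> bool" where
  "Met_open X U \<longleftrightarrow> U \<subseteq> Met X \<and>
     (\<forall>d\<in>U. \<exists>\<epsilon>>0. \<forall>e\<in>Met X. DX X d e < ereal \<epsilon> \<longrightarrow> e \<in> U)"

lemma istopology_Met_open: "istopology (Met_open X)"
  unfolding istopology_def Met_open_def
proof (rule conjI; intro allI impI)
  fix S T assume assms_S: "S \<subseteq> Met X \<and> (\<forall>d\<in>S. \<exists>\<epsilon>>0. \<forall>e\<in>Met X. DX X d e < ereal \<epsilon> \<longrightarrow> e \<in> S)"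
    and assms_T: "T \<subseteq> Met X \<and> (\<forall>d\<in>T. \<exists>\<epsilon>>0. \<forall>e\<in>Met X. DX X d e < ereal \<epsilon> \<longrightarrow> e \<in> T)"
  show "S \<inter> T \<subseteq> Met X \<and> (\<forall>d\<in>S \<inter> T. \<exists>\<epsilon>>0. \<forall>e\<in>Met X. DX X d e < ereal \<epsilon> \<longrightarrow> e \<in> S \<inter> T)"
  proof (intro conjI ballI)
    fix d assume d: "d \<in> S \<inter> T"
    from assms_S d obtain a where a: "a > 0" "\<forall>e\<in>Met X. DX X d e < ereal a \<longrightarrow> e \<in> S" by blast
    from assms_T d obtain b where b: "b > 0" "\<forall>e\<in>Met X. DX X d e < ereal b \<longrightarrow> e \<in> T" by blast
    show "\<exists>\<epsilon>>0. \<forall>e\<in>Met X. DX X d e < ereal \<epsilon> \<longrightarrow> e \<in> S \<inter> T"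
    proof (rule exI[of _ "min a b"], intro conjI ballI impI)
      show "0 < min a b" using a b by simp
    next
      fix e assume "e \<in> Met X" "DX X d e < ereal (min a b)"
      moreover have "ereal (min a b) \<le> ereal a" "ereal (min a b) \<le> ereal b" by auto
      ultimately show "e \<in> S \<inter> T" using a b by (meson IntI order_less_le_trans)
    qed
  qed (use assms_S in blast)
next
  fix K assume K: "\<forall>S\<in>K. S \<subseteq> Met X \<and> (\<forall>d\<in>S. \<exists>\<epsilon>>0. \<forall>e\<in>Met X. DX X d e < ereal \<epsilon> \<longrightarrow> e \<in> S)"
  show "\<Union>K \<subseteq> Met X \<and> (\<forall>d\<in>\<Union>K. \<exists>\<epsilon>>0. \<forall>e\<in>Met X. DX X d e < ereal \<epsilon> \<longrightarrow> e \<in> \<Union>K)"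
  proof (intro conjI ballI)
    show "\<Union>K \<subseteq> Met X" using K by auto
  next
    fix d assume "d \<in> \<Union>K"
    then obtain S where S: "S \<in> K" "d \<in> S" by auto
    with K obtain a where "a > 0" "\<forall>e\<in>Met X. DX X d e < ereal a \<longrightarrow> e \<in> S" by blast
    then show "\<exists>\<epsilon>>0. \<forall>e\<in>Met X. DX X d e < ereal \<epsilon> \<longrightarrow> e \<in> \<Union>K" using S by blast
  qed
qed

definition Met_topology :: "'a::topological_space set \<Rightarrow> ('a \<Rightarrow> 'a \<Rightarrow> real) topology" where
  "Met_topology X = topology (Met_open X)"

lemma openin_Met_topology: "openin (Met_topology X) U \<longleftrightarrow> Met_open X U"
  unfolding Met_topology_def by (simp add: istopology_Met_open)

definition mdiam :: "'a set \<Rightarrow> ('a \<Rightarrow> 'a \<Rightarrow> real) \<Rightarrow> ereal" where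
  "mdiam X d = (SUP p \<in> X \<times> X. ereal (d (fst p) (snd p)))"

definition c_uniformly_perfect :: "real \<Rightarrow> 'a set \<Rightarrow> ('a \<Rightarrow> 'a \<Rightarrow> real) \<Rightarrow> bool" where
  "c_uniformly_perfect c X d \<longleftrightarrow>
     (\<forall>x\<in>X. \<forall>r. 0 < r \<and> ereal r < mdiam X d \<longrightarrow> (\<exists>y\<in>X. c * r \<le> d x y \<and> d x y \<le> r))"

definition uniformly_perfect :: "'a set \<Rightarrow> ('a \<Rightarrow> 'a \<Rightarrow> real) \<Rightarrow> bool" where
  "uniformly_perfect X d \<longleftrightarrow> (\<exists>c. 0 < c \<and> c < 1 \<and> c_uniformly_perfect c X d)"

end

theory Submission
  imports Defs
begin

definition cs :: "(nat \<Rightarrow> bool) \<Rightarrow> real" where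
  "cs b = (\<Sum>k. 2 * of_bool (b k) / 3 ^ Suc k)"

lemma geo_tail: "(\<lambda>j. 2 / 3 ^ Suc (j + m) :: real) sums (1 / 3 ^ m)"
proof -
  have "(\<lambda>j. (2 / 3 ^ Suc m) * (1/3::real) ^ j) sums ((2 / 3 ^ Suc m) * (1 / (1 - 1/3)))"
    by (intro sums_mult geometric_sums) simp
  moreover have "(2 / 3 ^ Suc m) * (1 / (1 - 1/3)) = (1 / 3 ^ m :: real)" by simp
  moreover have "(2 / 3 ^ Suc m) * (1/3::real) ^ j = 2 / 3 ^ Suc (j + m)" for j
    by (simp add: power_add power_one_over field_simps)
  ultimately show ?thesis by simp
qed

lemma term_bound: "\<bar>2 * of_bool (b k) / 3 ^ Suc k - 2 * of_bool (b' k) / 3 ^ Suc k\<bar> \<le> (2 / 3 ^ Suc k :: real)"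
  by auto

lemma summable_geo2: "summable (\<lambda>k. 2 / 3 ^ Suc k :: real)"
  using geo_tail[of 0] by (simp add: sums_summable)

lemma summable_cs: "summable (\<lambda>k. 2 * of_bool (b k) / 3 ^ Suc k :: real)"
  by (rule summable_comparison_test[OF _ summable_geo2]) auto

lemma summable_u: "summable (\<lambda>k. 2 * of_bool (b k) / 3 ^ Suc k - 2 * of_bool (b' k) / 3 ^ Suc k :: real)"
  by (intro summable_diff summable_cs)

lemma cs_diff: "cs b - cs b' = (\<Sum>k. 2 * of_bool (b k) / 3 ^ Suc k - 2 * of_bool (b' k) / 3 ^ Suc k)"
  unfolding cs_def by (rule suminf_diff[OF summable_cs summable_cs])

lemma tail_bound:
  "\<bar>\<Sum>j. (2 * of_bool (b (j+m)) / 3 ^ Suc (j+m) - 2 * of_bool (b' (j+m)) / 3 ^ Suc (j+m) :: real)\<bar> \<le> 1 / 3 ^ m"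
proof -
  let ?u = "\<lambda>j. (2 * of_bool (b (j+m)) / 3 ^ Suc (j+m) - 2 * of_bool (b' (j+m)) / 3 ^ Suc (j+m) :: real)"
  have s: "summable (\<lambda>j. 2 / 3 ^ Suc (j + m) :: real)" using geo_tail sums_summable by blast
  have sa: "summable (\<lambda>j. \<bar>?u j\<bar>)"
    by (rule summable_rabs_comparison_test[OF _ s]) (use term_bound in blast)
  have "\<bar>suminf ?u\<bar> \<le> (\<Sum>j. \<bar>?u j\<bar>)" by (rule summable_rabs[OF sa])
  also have "\<dots> \<le> (\<Sum>j. 2 / 3 ^ Suc (j + m))"
    by (rule suminf_le[OF _ sa s]) (rule term_bound)
  also have "\<dots> = 1 / 3 ^ m" using geo_tail sums_unique by metis
  finally show ?thesis .
qed

lemma split_u: "(\<Sum>k. (u::nat\<Rightarrow>real) k) = (\<Sum>i<m. u i) + (\<Sum>j. u (j + m))" if "summable u"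
  using suminf_split_initial_segment[OF that, of m] by simp

lemma agree_close:
  assumes "\<forall>k<m. b k = b' k"
  shows "\<bar>cs b - cs b'\<bar> \<le> 1 / 3 ^ m"
proof -
  have "cs b - cs b' = (\<Sum>i<m. 2 * of_bool (b i) / 3 ^ Suc i - 2 * of_bool (b' i) / 3 ^ Suc i)
     + (\<Sum>j. (2 * of_bool (b (j+m)) / 3 ^ Suc (j+m) - 2 * of_bool (b' (j+m)) / 3 ^ Suc (j+m) :: real))"
    unfolding cs_diff by (rule split_u[OF summable_u])
  also have "(\<Sum>i<m. 2 * of_bool (b i) / 3 ^ Suc i - 2 * of_bool (b' i) / 3 ^ Suc i :: real) = 0"
    using assms by (intro sum.neutral) auto
  finally show ?thesis using tail_bound[of b m b'] by simp
qed

lemma abs_aux: "x = a + t \<Longrightarrow> \<bar>a\<bar> = 2*q \<Longrightarrow> \<bar>t\<bar> \<le> q \<Longrightarrow> (q::real) \<le> \<bar>x\<bar>"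
  by linarith

lemma differ_far:
  assumes "b k \<noteq> b' k" "\<forall>j<k. b j = b' j"
  shows "\<bar>cs b - cs b'\<bar> \<ge> 1 / 3 ^ Suc k"
proof -
  define u where "u = (\<lambda>i. 2 * of_bool (b i) / 3 ^ Suc i - 2 * of_bool (b' i) / 3 ^ Suc i :: real)"
  have "cs b - cs b' = (\<Sum>i<Suc k. u i) + (\<Sum>j. u (j + Suc k))"
    unfolding cs_diff u_def by (rule split_u[OF summable_u])
  also have "(\<Sum>i<Suc k. u i) = u k"
    using assms(2) unfolding u_def by (simp add: sum.lessThan_Suc)
  finally have eq: "cs b - cs b' = u k + (\<Sum>j. u (j + Suc k))" .
  have "\<bar>u k\<bar> = 2 * (1 / 3 ^ Suc k)"
    using assms(1) unfolding u_def by (cases "b k") auto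
  moreover have "\<bar>\<Sum>j. u (j + Suc k)\<bar> \<le> 1 / 3 ^ Suc k"
    using tail_bound[of b "Suc k" b'] unfolding u_def .
  ultimately show ?thesis using eq abs_aux by blast
qed

lemma close_agree:
  assumes "\<bar>cs b - cs b'\<bar> < 1 / 3 ^ m"
  shows "\<forall>k<m. b k = b' k"
proof (rule ccontr)
  assume "\<not> ?thesis"
  then have ex: "\<exists>k. b k \<noteq> b' k \<and> k < m" by blast
  define k where "k = (LEAST k. b k \<noteq> b' k \<and> k < m)"
  have k: "b k \<noteq> b' k" "k < m" using LeastI_ex[OF ex] unfolding k_def by auto
  have "\<forall>j<k. b j = b' j"
  proof (intro allI impI)
    fix j assume "j < k"
    have "\<not> (b j \<noteq> b' j \<and> j < m)" using not_less_Least[of j "\<lambda>k. b k \<noteq> b' k \<and> k < m"] \<open>j < k\<close> unfolding k_def by blast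
    then show "b j = b' j" using \<open>j < k\<close> k(2) by simp
  qed
  then have "\<bar>cs b - cs b'\<bar> \<ge> 1 / 3 ^ Suc k" by (rule differ_far[of b k b', OF k(1)])
  moreover have "(1::real) / 3 ^ m \<le> 1 / 3 ^ Suc k"
  proof -
    have "(3::real)^Suc k \<le> 3^m" by (rule power_increasing) (use k in auto)
    then show ?thesis by (intro divide_left_mono) simp_all
  qed
  ultimately show False using assms by linarith
qed

lemma inj_cs: "inj cs"
proof (rule injI)
  fix b b' assume "cs b = cs b'"
  then have "\<forall>k<Suc n. b k = b' k" for n by (intro close_agree) simp
  then show "b = b'" by (intro ext) (metis lessI)
qed

lemma cantor_set_eq: "cantor_set = range cs"
  unfolding cantor_set_def cs_def by (simp add: full_SetCompr_eq)

lemma flip_dist: "\<bar>cs (b(k := \<not> b k)) - cs b\<bar> = 2 / 3 ^ Suc k"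
proof -
  let ?u = "\<lambda>j. 2 * of_bool ((b(k := \<not> b k)) j) / 3 ^ Suc j - 2 * of_bool (b j) / 3 ^ Suc j :: real"
  have "?u = (\<lambda>j. if j = k then ?u k else 0)" by auto
  then have "?u sums ?u k" using sums_single[of k "\<lambda>_. ?u k"] by metis
  then have "cs (b(k := \<not> b k)) - cs b = ?u k" unfolding cs_diff by (simp add: sums_iff)
  then show ?thesis by (cases "b k") auto
qed

lemma cs_le1: "\<bar>cs b - cs b'\<bar> \<le> 1"
  using agree_close[of 0 b b'] by simp

lemma topspace_Met: "topspace (Met_topology X) = Met X"
proof -
  have "openin (Met_topology X) (Met X)"
    unfolding openin_Met_topology Met_open_def by (simp add: exI[of _ "1::real"])
  moreover have "openin (Met_topology X) U \<Longrightarrow> U \<subseteq> Met X" for U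
    unfolding openin_Met_topology Met_open_def by simp
  ultimately show ?thesis
    unfolding topspace_def by blast
qed

lemma DX_le: "x \<in> X \<Longrightarrow> y \<in> X \<Longrightarrow> ereal \<bar>d x y - e x y\<bar> \<le> DX X d e"
  unfolding DX_def by (rule SUP_upper2[of "(x,y)"]) auto

lemma DX_less: "DX X d e < ereal \<eta> \<Longrightarrow> x \<in> X \<Longrightarrow> y \<in> X \<Longrightarrow> \<bar>d x y - e x y\<bar> < \<eta>"
proof -
  assume a: "DX X d e < ereal \<eta>" "x \<in> X" "y \<in> X"
  have "ereal \<bar>d x y - e x y\<bar> < ereal \<eta>" by (rule order.strict_trans1[OF DX_le[OF a(2,3)] a(1)])
  then show ?thesis unfolding less_ereal.simps(1) .
qed

lemma DX_bound: "(\<And>x y. x \<in> X \<Longrightarrow> y \<in> X \<Longrightarrow> \<bar>d x y - e x y\<bar> \<le> B) \<Longrightarrow> DX X d e \<le> ereal B"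
  unfolding DX_def by (rule SUP_least) auto

lemma mdiam_ge: "x \<in> X \<Longrightarrow> y \<in> X \<Longrightarrow> ereal (d x y) \<le> mdiam X d"
  unfolding mdiam_def by (rule SUP_upper2[of "(x,y)"]) auto

lemma mdiam_gt: "ereal r < mdiam X d \<Longrightarrow> \<exists>x\<in>X. \<exists>y\<in>X. r < d x y"
proof -
  assume "ereal r < mdiam X d"
  then obtain p where "p \<in> X \<times> X" "ereal r < ereal (d (fst p) (snd p))"
    unfolding mdiam_def less_SUP_iff by blast
  then show ?thesis unfolding less_ereal.simps(1) by (cases p) auto
qed

lemma mdiam_bound: "(\<And>x y. x \<in> X \<Longrightarrow> y \<in> X \<Longrightarrow> d x y \<le> B) \<Longrightarrow> mdiam X d \<le> ereal B"
  unfolding mdiam_def by (rule SUP_least) auto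

definition A_prop :: "real \<Rightarrow> 'a set \<Rightarrow> ('a \<Rightarrow> 'a \<Rightarrow> real) \<Rightarrow> bool" where
  "A_prop c X d \<longleftrightarrow> (\<forall>x\<in>X. \<forall>r. 0 < r \<and> ereal r < mdiam X d \<longrightarrow>
      (\<forall>\<delta>>0. \<exists>y\<in>X. c * r - \<delta> \<le> d x y \<and> d x y \<le> r + \<delta>))"

lemma UP_imp_A: "c_uniformly_perfect c X d \<Longrightarrow> c' \<le> c \<Longrightarrow> 0 \<le> c' \<Longrightarrow> A_prop c' X d"
  unfolding A_prop_def c_uniformly_perfect_def
proof (intro ballI allI impI)
  fix x and r \<delta> :: real
  assume H: "\<forall>x\<in>X. \<forall>r. 0 < r \<and> ereal r < mdiam X d \<longrightarrow> (\<exists>y\<in>X. c * r \<le> d x y \<and> d x y \<le> r)"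
    and c: "c' \<le> c" "0 \<le> c'" and x: "x \<in> X" and r: "0 < r \<and> ereal r < mdiam X d" and "0 < \<delta>"
  then obtain y where "y \<in> X" "c * r \<le> d x y" "d x y \<le> r" by blast
  moreover have "c' * r \<le> c * r" using c r by (intro mult_right_mono) auto
  ultimately show "\<exists>y\<in>X. c' * r - \<delta> \<le> d x y \<and> d x y \<le> r + \<delta>"
    using \<open>0 < \<delta>\<close> by (intro bexI[of _ y]) auto
qed

lemma A_imp_UP: "A_prop c X d \<Longrightarrow> 0 < c \<Longrightarrow> c_uniformly_perfect (c/2) X d"
  unfolding A_prop_def c_uniformly_perfect_def
proof (intro ballI allI impI)
  fix x and r :: real
  assume H: "\<forall>x\<in>X. \<forall>r. 0 < r \<and> ereal r < mdiam X d \<longrightarrow>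
      (\<forall>\<delta>>0. \<exists>y\<in>X. c * r - \<delta> \<le> d x y \<and> d x y \<le> r + \<delta>)"
    and c: "0 < c" and x: "x \<in> X" and r: "0 < r \<and> ereal r < mdiam X d"
  have r': "0 < 3*r/4 \<and> ereal (3*r/4) < mdiam X d"
  proof -
    have r0: "0 < r" using r by blast
    have l: "ereal (3*r/4) < ereal r" unfolding less_ereal.simps(1) using r0 by linarith
    show ?thesis using r order.strict_trans[OF l] by simp
  qed
  have pos: "0 < min (r/4) (c*r/4)" using r c by simp
  have HH: "\<forall>\<delta>>0. \<exists>y\<in>X. c * (3*r/4) - \<delta> \<le> d x y \<and> d x y \<le> 3*r/4 + \<delta>"
    using H x r' by (meson)
  obtain y where y: "y \<in> X" "c * (3*r/4) - min (r/4) (c*r/4) \<le> d x y"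
     "d x y \<le> 3*r/4 + min (r/4) (c*r/4)" using HH[rule_format, OF pos] by blast
  have m: "min (r/4) (c*r/4) \<le> c*r/4" by (rule min.cobounded2)
  have e: "c/2*r = c*(3*r/4) - c*r/4" by (simp add: field_simps)
  have "c/2 * r \<le> d x y" using y(2) m unfolding e by linarith
  moreover have "d x y \<le> r" using y(3) min.cobounded1[of "r/4" "c*r/4"] by linarith
  ultimately show "\<exists>y\<in>X. c / 2 * r \<le> d x y \<and> d x y \<le> r" using y(1) by blast
qed

lemma not_A_open:
  assumes d: "d \<in> Met X" and nA: "\<not> A_prop c X d"
  shows "\<exists>\<epsilon>>0. \<forall>e\<in>Met X. DX X d e < ereal \<epsilon> \<longrightarrow> \<not> A_prop c X e"
proof -
  obtain x r \<delta> where x: "x \<in> X" and r: "0 < r" "ereal r < mdiam X d" and \<delta>: "\<delta> > 0"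
    and no: "\<forall>y\<in>X. \<not> (c * r - \<delta> \<le> d x y \<and> d x y \<le> r + \<delta>)"
    using nA unfolding A_prop_def by blast
  obtain p q where pq: "p \<in> X" "q \<in> X" "r < d p q" using mdiam_gt[OF r(2)] by blast
  define \<eta> where "\<eta> = min (\<delta>/2) (d p q - r)"
  have \<eta>: "\<eta> > 0" unfolding \<eta>_def using \<delta> pq by simp
  have "\<not> A_prop c X e" if e: "e \<in> Met X" "DX X d e < ereal \<eta>" for e
  proof
    assume A: "A_prop c X e"
    have "\<bar>d p q - e p q\<bar> < \<eta>" by (rule DX_less[OF e(2) pq(1,2)])
    then have "r < e p q" unfolding \<eta>_def by linarith
    then have "ereal r < ereal (e p q)" unfolding less_ereal.simps(1) .
    then have re: "ereal r < mdiam X e" using mdiam_ge[OF pq(1,2), of e] by (rule order.strict_trans2)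
    have "\<delta>/2 > 0" using \<delta> by simp
    then obtain y where y: "y \<in> X" "c * r - \<delta>/2 \<le> e x y" "e x y \<le> r + \<delta>/2"
      using A x r(1) re unfolding A_prop_def by blast
    have "\<bar>d x y - e x y\<bar> < \<eta>" by (rule DX_less[OF e(2) x y(1)])
    then have "\<bar>d x y - e x y\<bar> < \<delta>/2" unfolding \<eta>_def by linarith
    then have "c * r - \<delta> \<le> d x y \<and> d x y \<le> r + \<delta>" using y(2,3) by linarith
    then show False using no y(1) by blast
  qed
  then show ?thesis using \<eta> by blast
qed

lemma closed_A: "closedin (Met_topology X) {d \<in> Met X. A_prop c X d}"
proof -
  have "openin (Met_topology X) (Met X - {d \<in> Met X. A_prop c X d})"
    unfolding openin_Met_topology Met_open_def
  proof (intro conjI ballI)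
    fix d assume "d \<in> Met X - {d \<in> Met X. A_prop c X d}"
    then have d: "d \<in> Met X" "\<not> A_prop c X d" by auto
    obtain \<epsilon> where "\<epsilon> > 0" "\<forall>e\<in>Met X. DX X d e < ereal \<epsilon> \<longrightarrow> \<not> A_prop c X e"
      using not_A_open[OF d] by blast
    then show "\<exists>\<epsilon>>0. \<forall>e\<in>Met X. DX X d e < ereal \<epsilon> \<longrightarrow> e \<in> Met X - {d \<in> Met X. A_prop c X d}"
      by blast
  qed blast
  then show ?thesis unfolding closedin_def topspace_Met by auto
qed

lemma UP_eq_UN: "{d \<in> Met X. uniformly_perfect X d} = (\<Union>n. {d \<in> Met X. A_prop (1 / (Suc (Suc n))) X d})"
proof (intro equalityI subsetI)
  fix d assume "d \<in> {d \<in> Met X. uniformly_perfect X d}"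
  then obtain c where d: "d \<in> Met X" "0 < c" "c < 1" "c_uniformly_perfect c X d"
    unfolding uniformly_perfect_def by blast
  obtain n where n: "inverse (real (Suc n)) < c" using reals_Archimedean[OF d(2)] by blast
  have "1 / real (Suc (Suc n)) \<le> inverse (real (Suc n))"
    by (simp add: divide_simps)
  then have "A_prop (1 / (Suc (Suc n))) X d"
    using n by (intro UP_imp_A[OF d(4)]) auto
  then show "d \<in> (\<Union>n. {d \<in> Met X. A_prop (1 / (Suc (Suc n))) X d})" using d(1) by blast
next
  fix d assume "d \<in> (\<Union>n. {d \<in> Met X. A_prop (1 / (Suc (Suc n))) X d})"
  then obtain n where d: "d \<in> Met X" "A_prop (1 / (Suc (Suc n))) X d" by blast
  have c: "0 < 1 / real (Suc (Suc n))" by simp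
  have "c_uniformly_perfect (1 / (Suc (Suc n)) / 2) X d" by (rule A_imp_UP[OF d(2) c])
  moreover have "0 < 1 / real (Suc (Suc n)) / 2" "1 / real (Suc (Suc n)) / 2 < 1"
    by (auto simp: divide_simps)
  ultimately show "d \<in> {d \<in> Met X. uniformly_perfect X d}"
    using d(1) unfolding uniformly_perfect_def by blast
qed

lemma fsigma_UP: "fsigma_in (Met_topology X) {d \<in> Met X. uniformly_perfect X d}"
  unfolding UP_eq_UN
  by (rule fsigma_in_Union) (auto intro: closed_imp_fsigma_in closed_A)

lemma gdelta_nonUP: "gdelta_in (Met_topology X) {d \<in> Met X. \<not> uniformly_perfect X d}"
proof -
  have e: "Met X - {d \<in> Met X. \<not> uniformly_perfect X d} = {d \<in> Met X. uniformly_perfect X d}"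
    by blast
  show ?thesis unfolding gdelta_in_fsigma_in topspace_Met e using fsigma_UP[of X]
    by blast
qed

lemma mtop_char:
  fixes M :: "real set"
  assumes m: "Metric_space M e"
  shows "Metric_space.mtopology M e = top_of_set M \<longleftrightarrow>
    (\<forall>x\<in>M. \<forall>\<epsilon>>0. (\<exists>\<delta>>0. \<forall>y\<in>M. \<bar>y - x\<bar> < \<delta> \<longrightarrow> e x y < \<epsilon>)
                 \<and> (\<exists>\<delta>>0. \<forall>y\<in>M. e x y < \<delta> \<longrightarrow> \<bar>y - x\<bar> < \<epsilon>))"
    (is "?L \<longleftrightarrow> ?R")
proof
  assume L: ?L
  show ?R
  proof (intro ballI allI impI conjI)
    fix x and \<epsilon> :: real assume x: "x \<in> M" and \<epsilon>: "\<epsilon> > 0"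
    have "openin (Metric_space.mtopology M e) (Metric_space.mball M e x \<epsilon>)"
      by (rule Metric_space.openin_mball[OF m])
    then have "openin (top_of_set M) (Metric_space.mball M e x \<epsilon>)" using L by simp
    moreover have "x \<in> Metric_space.mball M e x \<epsilon>" using x \<epsilon> Metric_space.centre_in_mball_iff[OF m] by blast
    ultimately obtain \<delta> where "\<delta> > 0" "\<forall>y\<in>M. dist y x < \<delta> \<longrightarrow> y \<in> Metric_space.mball M e x \<epsilon>"
      unfolding openin_euclidean_subtopology_iff by blast
    then show "\<exists>\<delta>>0. \<forall>y\<in>M. \<bar>y - x\<bar> < \<delta> \<longrightarrow> e x y < \<epsilon>"
      using Metric_space.in_mball[OF m] by (auto simp: dist_real_def)
  next
    fix x and \<epsilon> :: real assume x: "x \<in> M" and \<epsilon>: "\<epsilon> > 0"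
    have "openin (top_of_set M) (M \<inter> ball x \<epsilon>)"
      unfolding openin_euclidean_subtopology_iff
    proof (intro conjI ballI)
      fix z assume z: "z \<in> M \<inter> ball x \<epsilon>"
      then have "dist x z < \<epsilon>" by simp
      then show "\<exists>e>0. \<forall>x'\<in>M. dist x' z < e \<longrightarrow> x' \<in> M \<inter> ball x \<epsilon>"
        by (intro exI[of _ "\<epsilon> - dist x z"]) (auto intro: dist_triangle_less_add[of x x' z 0 for x', simplified]
           simp: dist_commute, metis add.commute dist_triangle_lt dist_commute less_diff_eq)
    qed auto
    then have "openin (Metric_space.mtopology M e) (M \<inter> ball x \<epsilon>)" using L by simp
    moreover have "x \<in> M \<inter> ball x \<epsilon>" using x \<epsilon> by simp
    ultimately obtain r where "r > 0" "Metric_space.mball M e x r \<subseteq> M \<inter> ball x \<epsilon>"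
      unfolding Metric_space.openin_mtopology[OF m] by blast
    then show "\<exists>\<delta>>0. \<forall>y\<in>M. e x y < \<delta> \<longrightarrow> \<bar>y - x\<bar> < \<epsilon>"
      using x Metric_space.in_mball[OF m] by (intro exI[of _ r]) (auto simp: dist_real_def)
  qed
next
  assume R: ?R
  show ?L
  proof (subst topology_eq, intro allI iffI)
    fix U assume U: "openin (Metric_space.mtopology M e) U"
    show "openin (top_of_set M) U"
      unfolding openin_euclidean_subtopology_iff
    proof (intro conjI ballI)
      show "U \<subseteq> M" using U Metric_space.openin_mtopology[OF m] by blast
    next
      fix x assume x: "x \<in> U"
      then obtain r where r: "r > 0" "Metric_space.mball M e x r \<subseteq> U"
        using U Metric_space.openin_mtopology[OF m] by blast
      have xM: "x \<in> M" using U x Metric_space.openin_mtopology[OF m] by blast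
      obtain \<delta> where "\<delta> > 0" "\<forall>y\<in>M. \<bar>y - x\<bar> < \<delta> \<longrightarrow> e x y < r" using R xM r(1) by blast
      then show "\<exists>e>0. \<forall>x'\<in>M. dist x' x < e \<longrightarrow> x' \<in> U"
        using r(2) xM Metric_space.in_mball[OF m] by (intro exI[of _ \<delta>]) (auto simp: dist_real_def)
    qed
  next
    fix U assume U: "openin (top_of_set M) U"
    show "openin (Metric_space.mtopology M e) U"
      unfolding Metric_space.openin_mtopology[OF m]
    proof (intro conjI allI impI)
      show "U \<subseteq> M" using U unfolding openin_euclidean_subtopology_iff by blast
    next
      fix x assume x: "x \<in> U"
      then obtain r where r: "r > 0" "\<forall>x'\<in>M. dist x' x < r \<longrightarrow> x' \<in> U"
        using U unfolding openin_euclidean_subtopology_iff by blast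
      have xM: "x \<in> M" using U x unfolding openin_euclidean_subtopology_iff by blast
      obtain \<delta> where "\<delta> > 0" "\<forall>y\<in>M. e x y < \<delta> \<longrightarrow> \<bar>y - x\<bar> < r" using R xM r(1) by blast
      then show "\<exists>r>0. Metric_space.mball M e x r \<subseteq> U"
        using r(2) xM Metric_space.in_mball[OF m] by (intro exI[of _ \<delta>]) (auto simp: dist_real_def)
    qed
  qed
qed

definition dig :: "real \<Rightarrow> nat \<Rightarrow> bool" where "dig y = inv cs y"

lemma dig_cs [simp]: "dig (cs b) = b"
  unfolding dig_def by (rule inv_f_f[OF inj_cs])

lemma cs_in [simp]: "cs b \<in> cantor_set"
  unfolding cantor_set_eq by simp

lemma cs_dig: "y \<in> cantor_set \<Longrightarrow> cs (dig y) = y"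
  unfolding dig_def cantor_set_eq by (simp add: f_inv_into_f)

lemma near_agree:
  assumes "x \<in> cantor_set" "y \<in> cantor_set" "\<bar>x - y\<bar> < 1 / 3 ^ m"
  shows "\<forall>k<m. dig x k = dig y k"
  by (rule close_agree) (use assms cs_dig in simp)

lemma agree_near:
  assumes "x \<in> cantor_set" "y \<in> cantor_set" "\<forall>k<m. dig x k = dig y k"
  shows "\<bar>x - y\<bar> \<le> 1 / 3 ^ m"
  using agree_close[OF assms(3)] assms(1,2) cs_dig by simp

lemma cantor_le1:
  assumes "x \<in> cantor_set" "y \<in> cantor_set"
  shows "\<bar>x - y\<bar> \<le> 1"
  using cs_le1[of "dig x" "dig y"] assms cs_dig by simp

lemma MetD:
  assumes "d \<in> Met X"
  shows "Metric_space X d" "Metric_space.mtopology X d = top_of_set X"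
    "\<And>x y. x \<notin> X \<or> y \<notin> X \<Longrightarrow> d x y = 0"
  using assms unfolding Met_def by auto

lemma met_cont:
  fixes X :: "real set"
  assumes "d \<in> Met X" "x \<in> X" "\<epsilon> > 0"
  shows "\<exists>\<delta>>0. \<forall>y\<in>X. \<bar>y - x\<bar> < \<delta> \<longrightarrow> d x y < \<epsilon>"
    "\<exists>\<delta>>0. \<forall>y\<in>X. d x y < \<delta> \<longrightarrow> \<bar>y - x\<bar> < \<epsilon>"
  using MetD(2)[OF assms(1)] unfolding mtop_char[OF MetD(1)[OF assms(1)]] using assms(2,3) by blast+

lemma compact_cantor: "compact cantor_set"
proof -
  define K where "K = PiE UNIV (\<lambda>_::nat. {0::real, 1})"
  define G where "G = (\<lambda>v::nat \<Rightarrow> real. \<Sum>k. 2 * v k / 3 ^ Suc k)"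
  have "compactin (product_topology (\<lambda>_. euclidean) UNIV) K"
    unfolding K_def compactin_PiE by (simp add: finite_imp_compact)
  then have cK: "compact K" unfolding euclidean_product_topology by simp
  have ul: "uniform_limit K (\<lambda>n v. \<Sum>k<n. 2 * v k / 3 ^ Suc k) G sequentially"
    unfolding G_def
  proof (rule Weierstrass_m_test[OF _ summable_geo2])
    fix n and v :: "nat \<Rightarrow> real" assume "v \<in> K"
    then have "v n \<in> {0,1}" unfolding K_def by auto
    then show "norm (2 * v n / 3 ^ Suc n) \<le> 2 / 3 ^ Suc n" by auto
  qed
  have "continuous_on K G"
  proof (rule uniform_limit_theorem[OF _ ul])
    show "\<forall>\<^sub>F n in sequentially. continuous_on K (\<lambda>v. \<Sum>k<n. 2 * v k / 3 ^ Suc k)"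
    proof (intro always_eventually allI continuous_on_sum continuous_on_divide continuous_on_mult continuous_on_const)
      fix n k show "continuous_on K (\<lambda>v. v k)"
        by (rule continuous_on_subset[OF continuous_on_product_coordinates]) simp
    qed auto
  qed simp
  then have "compact (G ` K)" using cK by (rule compact_continuous_image)
  moreover have "G ` K = cantor_set"
  proof (intro equalityI subsetI)
    fix y assume "y \<in> G ` K"
    then obtain v where v: "v \<in> K" "y = G v" by blast
    have "v = (\<lambda>k. of_bool (v k = 1))"
    proof
      fix k have "v k \<in> {0,1}" using v(1) unfolding K_def by auto
      then show "v k = of_bool (v k = 1)" by auto
    qed
    then have "y = cs (\<lambda>k. v k = 1)" unfolding v(2) G_def cs_def by (metis (no_types, lifting))
    then show "y \<in> cantor_set" by simp
  next
    fix y assume "y \<in> cantor_set"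
    then obtain b where b: "y = cs b" unfolding cantor_set_eq by blast
    have "(\<lambda>k. of_bool (b k) :: real) \<in> K" unfolding K_def by auto
    moreover have "y = G (\<lambda>k. of_bool (b k))" unfolding b G_def cs_def by simp
    ultimately show "y \<in> G ` K" by blast
  qed
  ultimately show ?thesis by simp
qed

lemma met_cont2:
  fixes X :: "real set"
  assumes d: "d \<in> Met X"
  shows "continuous_on (X \<times> X) (\<lambda>p. d (fst p) (snd p))"
  unfolding continuous_on_iff
proof (intro ballI allI impI)
  fix p and \<epsilon> :: real assume p: "p \<in> X \<times> X" and \<epsilon>: "\<epsilon> > 0"
  obtain x0 y0 where p0: "p = (x0, y0)" "x0 \<in> X" "y0 \<in> X" using p by auto
  have m: "Metric_space X d" by (rule MetD(1)[OF d])
  obtain \<delta>1 where \<delta>1: "\<delta>1 > 0" "\<forall>y\<in>X. \<bar>y - x0\<bar> < \<delta>1 \<longrightarrow> d x0 y < \<epsilon>/2"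
    using met_cont(1)[OF d p0(2), of "\<epsilon>/2"] \<epsilon> by auto
  obtain \<delta>2 where \<delta>2: "\<delta>2 > 0" "\<forall>y\<in>X. \<bar>y - y0\<bar> < \<delta>2 \<longrightarrow> d y0 y < \<epsilon>/2"
    using met_cont(1)[OF d p0(3), of "\<epsilon>/2"] \<epsilon> by auto
  show "\<exists>\<delta>>0. \<forall>q\<in>X \<times> X. dist q p < \<delta> \<longrightarrow> dist (d (fst q) (snd q)) (d (fst p) (snd p)) < \<epsilon>"
  proof (intro exI[of _ "min \<delta>1 \<delta>2"] conjI ballI impI)
    show "0 < min \<delta>1 \<delta>2" using \<delta>1 \<delta>2 by simp
  next
    fix q assume q: "q \<in> X \<times> X" "dist q p < min \<delta>1 \<delta>2"
    obtain x y where q0: "q = (x, y)" "x \<in> X" "y \<in> X" using q by auto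
    have "\<bar>x - x0\<bar> < \<delta>1" using q(2) dist_fst_le[of q p] unfolding q0 p0 by (simp add: dist_real_def)
    then have a: "d x0 x < \<epsilon>/2" using \<delta>1 q0 by blast
    have "\<bar>y - y0\<bar> < \<delta>2" using q(2) dist_snd_le[of q p] unfolding q0 p0 by (simp add: dist_real_def)
    then have b: "d y0 y < \<epsilon>/2" using \<delta>2 q0 by blast
    have t1: "d x y \<le> d x x0 + d x0 y0 + d y0 y"
      using Metric_space.triangle[OF m q0(2) p0(2) q0(3)] Metric_space.triangle[OF m p0(2) p0(3) q0(3)] by linarith
    have t2: "d x0 y0 \<le> d x0 x + d x y + d y y0"
      using Metric_space.triangle[OF m p0(2) q0(2) p0(3)] Metric_space.triangle[OF m q0(2) q0(3) p0(3)] by linarith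
    have c1: "d x x0 = d x0 x" "d y y0 = d y0 y" using Metric_space.commute[OF m] by auto
    show "dist (d (fst q) (snd q)) (d (fst p) (snd p)) < \<epsilon>"
      unfolding q0 p0 dist_real_def using t1 t2 c1 a b by simp
  qed
qed

lemma unif_small:
  assumes d: "d \<in> Met cantor_set" and \<eta>: "\<eta> > 0"
  shows "\<exists>\<delta>>0. \<forall>x\<in>cantor_set. \<forall>y\<in>cantor_set. \<bar>x - y\<bar> < \<delta> \<longrightarrow> d x y < \<eta>"
proof -
  have "uniformly_continuous_on (cantor_set \<times> cantor_set) (\<lambda>p. d (fst p) (snd p))"
    by (rule compact_uniformly_continuous[OF met_cont2[OF d] compact_Times[OF compact_cantor compact_cantor]])
  then obtain \<delta> where \<delta>: "\<delta> > 0" "\<forall>p\<in>cantor_set \<times> cantor_set. \<forall>q\<in>cantor_set \<times> cantor_set.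
       dist q p < \<delta> \<longrightarrow> dist (d (fst q) (snd q)) (d (fst p) (snd p)) < \<eta>"
    unfolding uniformly_continuous_on_def using \<eta> by blast
  have m: "Metric_space cantor_set d" by (rule MetD(1)[OF d])
  show ?thesis
  proof (intro exI[of _ \<delta>] conjI ballI impI)
    fix x y assume xy: "x \<in> cantor_set" "y \<in> cantor_set" "\<bar>x - y\<bar> < \<delta>"
    have "dist (x, y) (y, y) < \<delta>" using xy(3) by (simp add: dist_Pair_Pair dist_real_def)
    then have "dist (d x y) (d y y) < \<eta>" using \<delta>(2) xy(1,2) by force
    then show "d x y < \<eta>" using Metric_space.mdist_zero[OF m xy(2)] by (simp add: dist_real_def)
  qed (use \<delta> in simp)
qed

lemma met_bounded:
  assumes d: "d \<in> Met cantor_set"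
  shows "\<exists>B. \<forall>x\<in>cantor_set. \<forall>y\<in>cantor_set. d x y \<le> B"
proof -
  obtain B where B: "\<And>p. p \<in> cantor_set \<times> cantor_set \<Longrightarrow> norm (d (fst p) (snd p)) \<le> B"
    using continuous_on_compact_bound[OF compact_Times[OF compact_cantor compact_cantor] met_cont2[OF d]] by blast
  show ?thesis
  proof (intro exI ballI)
    fix x y assume "x \<in> cantor_set" "y \<in> cantor_set"
    then have "norm (d x y) \<le> B" using B[of "(x,y)"] by simp
    then show "d x y \<le> B" by simp
  qed
qed

locale upc =
  fixes d :: "real \<Rightarrow> real \<Rightarrow> real" and \<epsilon> :: real and m :: nat
  assumes d: "d \<in> Met cantor_set" and \<epsilon>: "\<epsilon> > 0"
    and m: "\<And>x y. x \<in> cantor_set \<Longrightarrow> y \<in> cantor_set \<Longrightarrow> \<bar>x - y\<bar> \<le> 1 / 3 ^ m \<Longrightarrow> d x y < \<epsilon>/4"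
begin

definition same where "same x y \<longleftrightarrow> (\<forall>k<m. dig x k = dig y k)"
definition rep where "rep x = cs (\<lambda>k. k < m \<and> dig x k)"
definition e where "e x y = (if x \<in> cantor_set \<and> y \<in> cantor_set then
   (if same x y then \<epsilon>/4 * \<bar>x - y\<bar> else d (rep x) (rep y) + \<epsilon>/4) else 0)"

lemma md: "Metric_space cantor_set d" by (rule MetD(1)[OF d])

lemma same_refl: "same x x" unfolding same_def by simp
lemma same_sym: "same x y \<Longrightarrow> same y x" unfolding same_def by simp
lemma same_trans: "same x y \<Longrightarrow> same y z \<Longrightarrow> same x z" unfolding same_def by simp

lemma rep_in: "rep x \<in> cantor_set" unfolding rep_def by simp
lemma same_rep: "same x (rep x)" unfolding same_def rep_def by simp
lemma rep_eq: "same x y \<Longrightarrow> rep x = rep y" unfolding same_def rep_def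
  by (metis (mono_tags, lifting))

lemma same_close: "x \<in> cantor_set \<Longrightarrow> y \<in> cantor_set \<Longrightarrow> same x y \<Longrightarrow> d x y < \<epsilon>/4"
  using m agree_near unfolding same_def by blast

lemma close_same: "x \<in> cantor_set \<Longrightarrow> y \<in> cantor_set \<Longrightarrow> \<bar>x - y\<bar> < 1/3^m \<Longrightarrow> same x y"
  using near_agree unfolding same_def by blast

lemma d_rep: "x \<in> cantor_set \<Longrightarrow> d x (rep x) < \<epsilon>/4"
  using same_close[OF _ rep_in same_rep] by blast

lemma e_nonneg: "0 \<le> e x y"
  unfolding e_def using \<epsilon> Metric_space.nonneg[OF md] by auto

lemma e_cross: "x \<in> cantor_set \<Longrightarrow> y \<in> cantor_set \<Longrightarrow> \<not> same x y \<Longrightarrow> e x y \<ge> \<epsilon>/4"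
  unfolding e_def using Metric_space.nonneg[OF md, of "rep x" "rep y"] by auto

lemma e_same: "x \<in> cantor_set \<Longrightarrow> y \<in> cantor_set \<Longrightarrow> same x y \<Longrightarrow> e x y = \<epsilon>/4 * \<bar>x - y\<bar>"
  unfolding e_def by simp

lemma e_cross_eq: "x \<in> cantor_set \<Longrightarrow> y \<in> cantor_set \<Longrightarrow> \<not> same x y \<Longrightarrow> e x y = d (rep x) (rep y) + \<epsilon>/4"
  unfolding e_def by simp

lemma e_metric: "Metric_space cantor_set e"
proof
  show "0 \<le> e x y" for x y by (rule e_nonneg)
  show "e x y = e y x" for x y
    unfolding e_def using same_sym Metric_space.commute[OF md] by (auto simp: abs_minus_commute)
  show "e x y = 0 \<longleftrightarrow> x = y" if "x \<in> cantor_set" "y \<in> cantor_set" for x y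
  proof (cases "same x y")
    case True
    have ee: "e x y = \<epsilon>/4 * \<bar>x - y\<bar>" by (rule e_same[OF that True])
    have ne: "\<epsilon>/4 \<noteq> 0" using \<epsilon> by simp
    show ?thesis unfolding ee using ne by (simp only: mult_eq_0_iff abs_eq_0 right_minus_eq simp_thms)
  next
    case False
    then have "x \<noteq> y" using same_refl by blast
    moreover have "e x y > 0" using e_cross[OF that False] \<epsilon> by linarith
    ultimately show ?thesis by simp
  qed
  show "e x z \<le> e x y + e y z" if xyz: "x \<in> cantor_set" "y \<in> cantor_set" "z \<in> cantor_set" for x y z
  proof (cases "same x z")
    case sxz: True
    have le1: "\<bar>x - z\<bar> \<le> 1" by (rule cantor_le1[OF xyz(1,3)])
    show ?thesis
    proof (cases "same x y")
      case sxy: True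
      then have syz: "same y z" using same_trans same_sym sxz by blast
      have "\<bar>x - z\<bar> \<le> \<bar>x - y\<bar> + \<bar>y - z\<bar>" by linarith
      then have "\<epsilon>/4 * \<bar>x - z\<bar> \<le> \<epsilon>/4 * \<bar>x - y\<bar> + \<epsilon>/4 * \<bar>y - z\<bar>"
        using \<epsilon> by (simp add: distrib_left[symmetric] mult_left_mono)
      then show ?thesis unfolding e_same[OF xyz(1,3) sxz] e_same[OF xyz(1,2) sxy] e_same[OF xyz(2,3) syz] .
    next
      case sxy: False
      then have syz: "\<not> same y z" using same_trans sxz same_sym by blast
      have "\<epsilon>/4 * \<bar>x - z\<bar> \<le> \<epsilon>/4" using le1 \<epsilon> by (simp add: mult_left_le)
      then show ?thesis using e_same[OF xyz(1,3) sxz] e_cross[OF xyz(1,2) sxy] e_cross[OF xyz(2,3) syz] \<epsilon>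
        by linarith
    qed
  next
    case sxz: False
    show ?thesis
    proof (cases "same x y")
      case sxy: True
      then have syz: "\<not> same y z" using same_trans sxz by blast
      have "e x z = e y z" using e_cross_eq[OF xyz(1,3) sxz] e_cross_eq[OF xyz(2,3) syz] rep_eq[OF sxy] by simp
      then show ?thesis using e_nonneg[of x y] by linarith
    next
      case sxy: False
      show ?thesis
      proof (cases "same y z")
        case syz: True
        have "e x z = e x y" using e_cross_eq[OF xyz(1,3) sxz] e_cross_eq[OF xyz(1,2) sxy] rep_eq[OF syz] by simp
        then show ?thesis using e_nonneg[of y z] by linarith
      next
        case syz: False
        have "d (rep x) (rep z) \<le> d (rep x) (rep y) + d (rep y) (rep z)"
          by (rule Metric_space.triangle[OF md rep_in rep_in rep_in])
        then show ?thesis using e_cross_eq[OF xyz(1,3) sxz] e_cross_eq[OF xyz(1,2) sxy] e_cross_eq[OF xyz(2,3) syz] \<epsilon>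
          by linarith
      qed
    qed
  qed
qed

lemma e_top: "Metric_space.mtopology cantor_set e = top_of_set cantor_set"
  unfolding mtop_char[OF e_metric]
proof (intro ballI allI impI conjI)
  fix x and \<eta> :: real assume x: "x \<in> cantor_set" and \<eta>: "\<eta> > 0"
  show "\<exists>\<delta>>0. \<forall>y\<in>cantor_set. \<bar>y - x\<bar> < \<delta> \<longrightarrow> e x y < \<eta>"
  proof (intro exI[of _ "min (1/3^m) (\<eta> / (\<epsilon>/4))"] conjI ballI impI)
    show "0 < min (1/3^m) (\<eta> / (\<epsilon>/4))" using \<eta> \<epsilon> by simp
  next
    fix y assume y: "y \<in> cantor_set" "\<bar>y - x\<bar> < min (1/3^m) (\<eta> / (\<epsilon>/4))"
    then have "same x y" using close_same[OF x y(1)] by (simp add: abs_minus_commute)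
    then have "e x y = \<epsilon>/4 * \<bar>x - y\<bar>" using e_same x y(1) by simp
    also have "\<dots> < \<epsilon>/4 * (\<eta> / (\<epsilon>/4))" using y(2) \<epsilon> by (intro mult_strict_left_mono) (auto simp: abs_minus_commute)
    also have "\<dots> = \<eta>" using \<epsilon> by simp
    finally show "e x y < \<eta>" .
  qed
  show "\<exists>\<delta>>0. \<forall>y\<in>cantor_set. e x y < \<delta> \<longrightarrow> \<bar>y - x\<bar> < \<eta>"
  proof (intro exI[of _ "min (\<epsilon>/4) (\<epsilon>/4 * \<eta>)"] conjI ballI impI)
    show "0 < min (\<epsilon>/4) (\<epsilon>/4 * \<eta>)" using \<eta> \<epsilon> by simp
  next
    fix y assume y: "y \<in> cantor_set" "e x y < min (\<epsilon>/4) (\<epsilon>/4 * \<eta>)"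
    then have s: "same x y" using e_cross[OF x y(1)] by force
    then have "\<epsilon>/4 * \<bar>x - y\<bar> < \<epsilon>/4 * \<eta>" using e_same[OF x y(1) s] y(2) by simp
    then show "\<bar>y - x\<bar> < \<eta>" using \<epsilon> by (simp add: abs_minus_commute)
  qed
qed

lemma e_Met: "e \<in> Met cantor_set"
  unfolding Met_def using e_metric e_top by (auto simp: e_def)

lemma e_DX: "DX cantor_set d e < ereal \<epsilon>"
proof -
  have "\<bar>d x y - e x y\<bar> \<le> 3*\<epsilon>/4" if xy: "x \<in> cantor_set" "y \<in> cantor_set" for x y
  proof (cases "same x y")
    case True
    have a: "d x y < \<epsilon>/4" by (rule same_close[OF xy True])
    have "\<epsilon>/4 * \<bar>x - y\<bar> \<le> \<epsilon>/4" using cantor_le1[OF xy] \<epsilon> by (simp add: mult_left_le)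
    moreover have "0 \<le> \<epsilon>/4 * \<bar>x - y\<bar>" using \<epsilon> by simp
    moreover have "0 \<le> d x y" by (rule Metric_space.nonneg[OF md])
    ultimately show ?thesis using a e_same[OF xy True] \<epsilon> by linarith
  next
    case False
    have r: "d x (rep x) < \<epsilon>/4" "d y (rep y) < \<epsilon>/4" using d_rep xy by auto
    have t1: "d x y \<le> d x (rep x) + d (rep x) (rep y) + d (rep y) y"
      using Metric_space.triangle[OF md xy(1) rep_in[of x] xy(2)] Metric_space.triangle[OF md rep_in[of x] rep_in[of y] xy(2)] by linarith
    have t2: "d (rep x) (rep y) \<le> d (rep x) x + d x y + d y (rep y)"
      using Metric_space.triangle[OF md rep_in[of x] xy(1) rep_in[of y]] Metric_space.triangle[OF md xy(1) xy(2) rep_in[of y]] by linarith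
    have c: "d (rep x) x = d x (rep x)" "d (rep y) y = d y (rep y)" using Metric_space.commute[OF md] by auto
    show ?thesis using e_cross_eq[OF xy False] t1 t2 c r \<epsilon> by linarith
  qed
  then have "DX cantor_set d e \<le> ereal (3*\<epsilon>/4)" by (rule DX_bound)
  also have "ereal (3*\<epsilon>/4) < ereal \<epsilon>" unfolding less_ereal.simps(1) using \<epsilon> by simp
  finally show ?thesis .
qed

end

context upc begin

definition w where "w k = \<epsilon>/4 * (2 / 3 ^ Suc k)"

lemma w_pos: "w k > 0" unfolding w_def using \<epsilon> by simp
lemma w_Suc: "w (Suc k) = w k / 3" unfolding w_def by simp

lemma w_small: "r > 0 \<Longrightarrow> \<exists>k. w k \<le> r"
proof -
  assume r: "r > 0"
  obtain n where n: "(1/3::real) ^ n < r / (\<epsilon>/2)" using real_arch_pow_inv[of "r / (\<epsilon>/2)" "1/3"] r \<epsilon> by auto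
  have "w n = (\<epsilon>/2) * ((1/3) ^ n / 3)" unfolding w_def by (simp add: power_one_over)
  also have "\<dots> \<le> (\<epsilon>/2) * (1/3) ^ n" using \<epsilon> by simp
  also have "\<dots> \<le> (\<epsilon>/2) * (r / (\<epsilon>/2))" using n \<epsilon> by (intro mult_left_mono) auto
  also have "\<dots> = r" using \<epsilon> by simp
  finally show ?thesis by blast
qed

lemma flip_pt:
  assumes x: "x \<in> cantor_set" and k: "m \<le> k"
  shows "\<exists>y\<in>cantor_set. e x y = w k"
proof -
  define y where "y = cs ((dig x)(k := \<not> dig x k))"
  have y: "y \<in> cantor_set" unfolding y_def by simp
  have "same x y" unfolding same_def y_def using k by simp
  moreover have "\<bar>x - y\<bar> = 2 / 3 ^ Suc k"
    using flip_dist[of "dig x" k] cs_dig[OF x] unfolding y_def by (simp add: abs_minus_commute)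
  ultimately have "e x y = w k" using e_same[OF x y] unfolding w_def by simp
  then show ?thesis using y by blast
qed

lemma e_UP: "uniformly_perfect cantor_set e"
proof -
  obtain B where B: "\<forall>x\<in>cantor_set. \<forall>y\<in>cantor_set. d x y \<le> B" using met_bounded[OF d] by blast
  define M where "M = \<bar>B\<bar> + \<epsilon>"
  have M: "M > 0" unfolding M_def using \<epsilon> by simp
  have eM: "e x y \<le> M" for x y
  proof (cases "x \<in> cantor_set \<and> y \<in> cantor_set")
    case True
    show ?thesis
    proof (cases "same x y")
      case s: True
      have "\<epsilon>/4 * \<bar>x - y\<bar> \<le> \<epsilon>/4" using cantor_le1[of x y] True \<epsilon> by (simp add: mult_left_le)
      moreover have "e x y = \<epsilon>/4 * \<bar>x - y\<bar>" using e_same[of x y] True s by blast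
      moreover have "0 \<le> \<bar>B\<bar>" by simp
      ultimately show ?thesis using \<epsilon> unfolding M_def by linarith
    next
      case s: False
      have "d (rep x) (rep y) \<le> B" using B rep_in by blast
      then show ?thesis using e_cross_eq[of x y] True s \<epsilon> unfolding M_def by simp
    qed
  next
    case False
    then show ?thesis unfolding e_def using M by auto
  qed
  have diam: "mdiam cantor_set e \<le> ereal M" by (rule mdiam_bound) (rule eM)
  define c where "c = min (1/3) (w m / M)"
  have c: "0 < c" "c < 1" unfolding c_def using w_pos M by auto
  have "c_uniformly_perfect c cantor_set e"
    unfolding c_uniformly_perfect_def
  proof (intro ballI allI impI)
    fix x r assume x: "x \<in> cantor_set" and r: "0 < r \<and> ereal r < mdiam cantor_set e"
    have r0: "0 < r" using r by blast
    have "ereal r < ereal M" using r diam by (meson order.strict_trans2)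
    then have rM: "r < M" unfolding less_ereal.simps(1) .
    show "\<exists>y\<in>cantor_set. c * r \<le> e x y \<and> e x y \<le> r"
    proof (cases "w m \<le> r")
      case True
      obtain y where y: "y \<in> cantor_set" "e x y = w m" using flip_pt[OF x order.refl] by blast
      have "c * r \<le> (w m / M) * r" unfolding c_def using r0 by (intro mult_right_mono) auto
      also have "\<dots> \<le> (w m / M) * M" using rM w_pos[of m] M by (intro mult_left_mono) auto
      also have "\<dots> = w m" using M by simp
      finally show ?thesis using y True by (intro bexI[of _ y]) auto
    next
      case False
      define P where "P k \<longleftrightarrow> m \<le> k \<and> w k \<le> r" for k
      obtain k1 where k1: "w k1 \<le> r" using w_small[OF r0] by blast
      have "w (k1 + m) \<le> w k1"
      proof -
        have "w (k1 + m) = \<epsilon>/2 / 3 ^ Suc (k1 + m)" "w k1 = \<epsilon>/2 / 3 ^ Suc k1" unfolding w_def by simp_all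
        moreover have "(3::real) ^ Suc k1 \<le> 3 ^ Suc (k1 + m)" by (rule power_increasing) auto
        ultimately show ?thesis using \<epsilon> by (simp add: frac_le)
      qed
      then have ex: "\<exists>k. P k" unfolding P_def using k1 by (intro exI[of _ "k1 + m"]) auto
      define k where "k = (LEAST k. P k)"
      have Pk: "P k" unfolding k_def by (rule LeastI_ex[OF ex])
      have km: "k \<noteq> m" using Pk False unfolding P_def by auto
      then have km': "m \<le> k - 1" "Suc (k - 1) = k" using Pk unfolding P_def by auto
      have "\<not> P (k - 1)" unfolding k_def
        using not_less_Least[of "k - 1" P] km' Pk unfolding k_def P_def by auto
      then have "r < w (k - 1)" using km' unfolding P_def by auto
      then have a: "r / 3 < w k" using w_Suc[of "k - 1"] km' by simp
      have c3: "c \<le> 1/3" unfolding c_def by (rule min.cobounded1)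
      have b: "c * r \<le> 1/3 * r" using r0 c3 by (intro mult_right_mono) auto
      have cr: "c * r \<le> w k" using a b by linarith
      obtain y where y: "y \<in> cantor_set" "e x y = w k" using flip_pt[OF x] Pk unfolding P_def by blast
      show ?thesis using Pk cr y unfolding P_def by (intro bexI[of _ y]) auto
    qed
  qed
  then show ?thesis unfolding uniformly_perfect_def using c by blast
qed

end

lemma UP_dense:
  assumes d: "d \<in> Met cantor_set" and \<epsilon>: "\<epsilon> > 0"
  shows "\<exists>e\<in>Met cantor_set. uniformly_perfect cantor_set e \<and> DX cantor_set d e < ereal \<epsilon>"
proof -
  obtain \<delta> where \<delta>: "\<delta> > 0" "\<forall>x\<in>cantor_set. \<forall>y\<in>cantor_set. \<bar>x - y\<bar> < \<delta> \<longrightarrow> d x y < \<epsilon>/4"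
    using unif_small[OF d, of "\<epsilon>/4"] \<epsilon> by auto
  obtain m where m: "(1/3::real) ^ m < \<delta>" using real_arch_pow_inv[of \<delta> "1/3"] \<delta> by auto
  have "upc d \<epsilon> m"
  proof
    fix x y assume "x \<in> cantor_set" "y \<in> cantor_set" "\<bar>x - y\<bar> \<le> 1 / 3 ^ m"
    then show "d x y < \<epsilon>/4" using \<delta>(2) m by (simp add: power_one_over)
  qed (use d \<epsilon> in auto)
  then interpret upc d \<epsilon> m .
  show ?thesis using e_Met e_UP e_DX by blast
qed

locale nup =
  fixes d :: "real \<Rightarrow> real \<Rightarrow> real" and \<epsilon> :: real
  assumes d: "d \<in> Met cantor_set" and \<epsilon>: "\<epsilon> > 0"
begin

lemma md: "Metric_space cantor_set d" by (rule MetD(1)[OF d])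

definition a :: "nat \<Rightarrow> real" where "a j = (\<epsilon>/2) / 2 ^ (j * j)"

lemma a_pos: "a j > 0" unfolding a_def using \<epsilon> by simp

lemma a_Suc: "a (Suc j) = a j / 2 ^ (2 * j + 1)"
proof -
  have "Suc j * Suc j = j * j + (2 * j + 1)" by simp
  then have "(2::real) ^ (Suc j * Suc j) = 2 ^ (j * j) * 2 ^ (2 * j + 1)" by (simp only: power_add)
  then show ?thesis unfolding a_def by simp
qed

lemma a_Suc_le: "a (Suc j) \<le> a j"
proof -
  have "(1::real) \<le> 2 ^ (2 * j + 1)" by (rule one_le_power) simp
  then show ?thesis unfolding a_Suc using a_pos[of j] by (simp add: divide_le_eq)
qed

lemma a_anti: "i \<le> j \<Longrightarrow> a j \<le> a i"
proof (induction j)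
  case 0 then show ?case by simp
next
  case (Suc j)
  show ?case
  proof (cases "i = Suc j")
    case False
    then have "a j \<le> a i" using Suc by simp
    then show ?thesis using a_Suc_le[of j] by linarith
  qed simp
qed

lemma a_le_geo: "a j \<le> (\<epsilon>/2) * (1/2) ^ j"
proof -
  have "(2::real) ^ j \<le> 2 ^ (j * j)" by (rule power_increasing) (auto simp: le_square)
  then have "(\<epsilon>/2) / 2 ^ (j * j) \<le> (\<epsilon>/2) / 2 ^ j" using \<epsilon> by (intro divide_left_mono) auto
  then show ?thesis unfolding a_def by (simp add: power_one_over)
qed

lemma a_small: "\<eta> > 0 \<Longrightarrow> \<exists>j. a j < \<eta>"
proof -
  assume \<eta>: "\<eta> > 0"
  obtain j where j: "(1/2::real) ^ j < \<eta> / (\<epsilon>/2)" using real_arch_pow_inv[of "\<eta> / (\<epsilon>/2)" "1/2"] \<eta> \<epsilon> by auto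
  have "(\<epsilon>/2) * (1/2) ^ j < (\<epsilon>/2) * (\<eta> / (\<epsilon>/2))" using j \<epsilon> by (intro mult_strict_left_mono) auto
  then have "(\<epsilon>/2) * (1/2) ^ j < \<eta>" using \<epsilon> by simp
  then show ?thesis using a_le_geo[of j] by (intro exI[of _ j]) linarith
qed

lemma a_ratio: "c > 0 \<Longrightarrow> \<exists>j. a (Suc j) < c * (a j / 2)"
proof -
  assume c: "c > 0"
  obtain j where j: "(1/2::real) ^ j < c / 2" using real_arch_pow_inv[of "c/2" "1/2"] c by auto
  have "(2::real) ^ j \<le> 2 ^ (2 * j + 1)" by (rule power_increasing) auto
  then have "1 / (2::real) ^ (2 * j + 1) \<le> 1 / 2 ^ j" by (intro divide_left_mono) auto
  then have "1 / (2::real) ^ (2 * j + 1) < c / 2" using j by (simp add: power_one_over)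
  then have "a j * (1 / 2 ^ (2 * j + 1)) < a j * (c / 2)" using a_pos[of j] by (intro mult_strict_left_mono) auto
  then show ?thesis unfolding a_Suc by (intro exI[of _ j]) (simp add: field_simps)
qed

definition p where "p = cs (\<lambda>_. False)"
lemma p_in: "p \<in> cantor_set" unfolding p_def by simp
lemma dig_p: "dig p = (\<lambda>_. False)" unfolding p_def by simp

definition Q where "Q n j \<longleftrightarrow> (\<forall>y\<in>cantor_set. \<bar>y - p\<bar> \<le> 1 / 3 ^ n \<longrightarrow> d p y \<le> a j)"

lemma Q_mono: "Q n j \<Longrightarrow> n \<le> n' \<Longrightarrow> Q n' j"
proof -
  assume Q: "Q n j" and n: "n \<le> n'"
  have "(1::real) / 3 ^ n' \<le> 1 / 3 ^ n"
  proof -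
    have "(3::real) ^ n \<le> 3 ^ n'" by (rule power_increasing[OF n]) simp
    then show ?thesis by (intro divide_left_mono) auto
  qed
  then show "Q n' j" using Q unfolding Q_def by force
qed

lemma Q_ex: "\<exists>n. Q n j"
proof -
  obtain \<delta> where \<delta>: "\<delta> > 0" "\<forall>y\<in>cantor_set. \<bar>y - p\<bar> < \<delta> \<longrightarrow> d p y < a j"
    using met_cont(1)[OF d p_in a_pos[of j]] by blast
  obtain n where n: "(1/3::real) ^ n < \<delta>" using real_arch_pow_inv[of \<delta> "1/3"] \<delta> by auto
  have "Q n j" unfolding Q_def
  proof (intro ballI impI)
    fix y assume "y \<in> cantor_set" "\<bar>y - p\<bar> \<le> 1 / 3 ^ n"
    moreover have "1 / 3 ^ n < \<delta>" using n by (simp add: power_one_over)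
    ultimately show "d p y \<le> a j" using \<delta>(2) by force
  qed
  then show ?thesis by blast
qed

definition N where "N = Suc (SOME n. Q n 0)"
lemma N_pos: "N \<ge> 1" unfolding N_def by simp
lemma Q_N: "N \<le> n \<Longrightarrow> Q n 0"
  using Q_mono[OF someI_ex[OF Q_ex[of 0]]] unfolding N_def by simp

definition J where "J n = (GREATEST j. j \<le> n \<and> Q n j)"
definition g where "g n = a (J n)"

lemma J_prop: "N \<le> n \<Longrightarrow> J n \<le> n \<and> Q n (J n)"
  unfolding J_def by (rule GreatestI_nat[of _ 0]) (use Q_N in auto)

lemma J_ge: "N \<le> n \<Longrightarrow> j \<le> n \<Longrightarrow> Q n j \<Longrightarrow> j \<le> J n"
  unfolding J_def by (rule Greatest_le_nat[of _ _ n]) auto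

lemma g_small: "\<exists>n0\<ge>N. \<forall>n\<ge>n0. g n \<le> a j"
proof -
  obtain nj where "Q nj j" using Q_ex by blast
  define n0 where "n0 = max N (max j nj)"
  have "\<forall>n\<ge>n0. g n \<le> a j"
  proof (intro allI impI)
    fix n assume n: "n0 \<le> n"
    have "Q n j" using Q_mono[OF \<open>Q nj j\<close>] n unfolding n0_def by simp
    then have "j \<le> J n" using J_ge n unfolding n0_def by simp
    then show "g n \<le> a j" unfolding g_def by (rule a_anti)
  qed
  moreover have "N \<le> n0" unfolding n0_def by simp
  ultimately show ?thesis by blast
qed

definition t where "t y = (LEAST k. dig y k)"

lemma t_ex: "y \<in> cantor_set \<Longrightarrow> y \<noteq> p \<Longrightarrow> \<exists>k. dig y k"
proof (rule ccontr)
  assume y: "y \<in> cantor_set" "y \<noteq> p" and "\<not> (\<exists>k. dig y k)"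
  then have "dig y = (\<lambda>_. False)" by auto
  then have "y = p" using cs_dig[OF y(1)] unfolding p_def by simp
  then show False using y by simp
qed

lemma t_prop: "y \<in> cantor_set \<Longrightarrow> y \<noteq> p \<Longrightarrow> dig y (t y) \<and> (\<forall>k<t y. \<not> dig y k)"
  unfolding t_def using LeastI_ex[OF t_ex] not_less_Least by blast

lemma t_near_p: "y \<in> cantor_set \<Longrightarrow> y \<noteq> p \<Longrightarrow> \<bar>y - p\<bar> \<le> 1 / 3 ^ t y"
  using agree_near[OF _ p_in, of y "t y"] t_prop dig_p by simp

lemma t_local:
  assumes y: "y \<in> cantor_set" "y \<noteq> p" and z: "z \<in> cantor_set" "\<bar>z - y\<bar> < 1 / 3 ^ Suc (t y)"
  shows "z \<noteq> p \<and> t z = t y"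
proof -
  have ag: "\<forall>k<Suc (t y). dig z k = dig y k" using near_agree[OF z(1) y(1) z(2)] .
  have tp: "dig y (t y)" "\<forall>k<t y. \<not> dig y k" using t_prop[OF y] by auto
  have zp: "z \<noteq> p" using ag tp dig_p by auto
  have "dig z (t y)" "\<forall>k<t y. \<not> dig z k" using ag tp by auto
  then have "t z = t y" unfolding t_def by (intro Least_equality) (auto simp: not_less[symmetric])
  then show ?thesis using zp by simp
qed

lemma t_far:
  assumes z: "z \<in> cantor_set" "z \<noteq> p" "\<bar>z - p\<bar> < 1 / 3 ^ n"
  shows "n \<le> t z"
proof (rule ccontr)
  assume "\<not> n \<le> t z"
  then have "t z < n" by simp
  then have "dig z (t z) = dig p (t z)" using near_agree[OF z(1) p_in z(3)] by blast
  then show False using t_prop[OF z(1,2)] dig_p by simp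
qed

definition f where "f y = (if y = p then 0 else if t y < N then a 0 else g (t y))"

lemma a_nonneg: "0 \<le> a j" using a_pos[of j] by simp

lemma f_range: "0 \<le> f y \<and> f y \<le> a 0"
  unfolding f_def g_def using a_nonneg a_anti[of 0] by auto

lemma f_cont:
  assumes x: "x \<in> cantor_set" and \<eta>: "\<eta> > 0"
  shows "\<exists>\<delta>>0. \<forall>y\<in>cantor_set. \<bar>y - x\<bar> < \<delta> \<longrightarrow> \<bar>f x - f y\<bar> < \<eta>"
proof (cases "x = p")
  case False
  show ?thesis
  proof (intro exI[of _ "1 / 3 ^ Suc (t x)"] conjI ballI impI)
    fix y assume "y \<in> cantor_set" "\<bar>y - x\<bar> < 1 / 3 ^ Suc (t x)"
    then have "y \<noteq> p \<and> t y = t x" using t_local[OF x False] by blast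
    then show "\<bar>f x - f y\<bar> < \<eta>" using False \<eta> unfolding f_def by simp
  qed simp
next
  case True
  obtain j where j: "a j < \<eta>" using a_small[OF \<eta>] by blast
  obtain n0 where n0: "n0 \<ge> N" "\<forall>n\<ge>n0. g n \<le> a j" using g_small by blast
  show ?thesis
  proof (intro exI[of _ "1 / 3 ^ n0"] conjI ballI impI)
    fix y assume y: "y \<in> cantor_set" "\<bar>y - x\<bar> < 1 / 3 ^ n0"
    show "\<bar>f x - f y\<bar> < \<eta>"
    proof (cases "y = p")
      case True then show ?thesis using \<open>x = p\<close> \<eta> by simp
    next
      case False
      have "n0 \<le> t y" using t_far[OF y(1) False] y(2) \<open>x = p\<close> by simp
      then have "f y = g (t y)" "g (t y) \<le> a j" using n0 False unfolding f_def by auto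
      then show ?thesis using \<open>x = p\<close> j f_range[of y] unfolding f_def by simp
    qed
  qed simp
qed

definition e where "e x y = (if x \<in> cantor_set \<and> y \<in> cantor_set then max (d x y) \<bar>f x - f y\<bar> else 0)"

lemma e_metric: "Metric_space cantor_set e"
proof
  show "0 \<le> e x y" for x y unfolding e_def using Metric_space.nonneg[OF md] by auto
  show "e x y = e y x" for x y unfolding e_def using Metric_space.commute[OF md] by (auto simp: abs_minus_commute)
  show "e x y = 0 \<longleftrightarrow> x = y" if "x \<in> cantor_set" "y \<in> cantor_set" for x y
    using that Metric_space.zero[OF md that] Metric_space.nonneg[OF md, of x y] unfolding e_def
    by (auto simp: max_def)
  show "e x z \<le> e x y + e y z" if xyz: "x \<in> cantor_set" "y \<in> cantor_set" "z \<in> cantor_set" for x y z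
  proof -
    have "d x z \<le> d x y + d y z" by (rule Metric_space.triangle[OF md xyz])
    moreover have "\<bar>f x - f z\<bar> \<le> \<bar>f x - f y\<bar> + \<bar>f y - f z\<bar>" by linarith
    ultimately show ?thesis using xyz unfolding e_def by (simp add: max_def)
  qed
qed

lemma e_top: "Metric_space.mtopology cantor_set e = top_of_set cantor_set"
  unfolding mtop_char[OF e_metric]
proof (intro ballI allI impI conjI)
  fix x and \<eta> :: real assume x: "x \<in> cantor_set" and \<eta>: "\<eta> > 0"
  obtain \<delta>1 where \<delta>1: "\<delta>1 > 0" "\<forall>y\<in>cantor_set. \<bar>y - x\<bar> < \<delta>1 \<longrightarrow> d x y < \<eta>"
    using met_cont(1)[OF d x \<eta>] by blast
  obtain \<delta>2 where \<delta>2: "\<delta>2 > 0" "\<forall>y\<in>cantor_set. \<bar>y - x\<bar> < \<delta>2 \<longrightarrow> \<bar>f x - f y\<bar> < \<eta>"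
    using f_cont[OF x \<eta>] by blast
  show "\<exists>\<delta>>0. \<forall>y\<in>cantor_set. \<bar>y - x\<bar> < \<delta> \<longrightarrow> e x y < \<eta>"
    using \<delta>1 \<delta>2 x unfolding e_def by (intro exI[of _ "min \<delta>1 \<delta>2"]) auto
  obtain \<delta>3 where \<delta>3: "\<delta>3 > 0" "\<forall>y\<in>cantor_set. d x y < \<delta>3 \<longrightarrow> \<bar>y - x\<bar> < \<eta>"
    using met_cont(2)[OF d x \<eta>] by blast
  show "\<exists>\<delta>>0. \<forall>y\<in>cantor_set. e x y < \<delta> \<longrightarrow> \<bar>y - x\<bar> < \<eta>"
    using \<delta>3 x unfolding e_def by (intro exI[of _ \<delta>3]) auto
qed

lemma e_Met: "e \<in> Met cantor_set"
  unfolding Met_def using e_metric e_top by (auto simp: e_def)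

lemma e_DX: "DX cantor_set d e < ereal \<epsilon>"
proof -
  have "\<bar>d x y - e x y\<bar> \<le> \<epsilon>/2" if xy: "x \<in> cantor_set" "y \<in> cantor_set" for x y
  proof -
    have "\<bar>f x - f y\<bar> \<le> a 0" using f_range[of x] f_range[of y] by linarith
    moreover have "a 0 = \<epsilon>/2" unfolding a_def by simp
    moreover have "0 \<le> d x y" by (rule Metric_space.nonneg[OF md])
    ultimately show ?thesis using xy \<epsilon> unfolding e_def by (simp add: max_def)
  qed
  then have "DX cantor_set d e \<le> ereal (\<epsilon>/2)" by (rule DX_bound)
  also have "ereal (\<epsilon>/2) < ereal \<epsilon>" unfolding less_ereal.simps(1) using \<epsilon> by simp
  finally show ?thesis .
qed

lemma e_p_values:
  assumes y: "y \<in> cantor_set"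
  shows "e p y = 0 \<or> a 0 \<le> e p y \<or> (\<exists>i. e p y = a i)"
proof (cases "y = p")
  case True then show ?thesis using Metric_space.mdist_zero[OF e_metric p_in] by simp
next
  case False
  show ?thesis
  proof (cases "t y < N")
    case True
    then have "f y = a 0" using False unfolding f_def by simp
    then have "a 0 \<le> e p y" using y p_in unfolding e_def f_def by simp
    then show ?thesis by simp
  next
    case tN: False
    then have fy: "f y = g (t y)" using False unfolding f_def by simp
    have "Q (t y) (J (t y))" using J_prop tN by simp
    then have "d p y \<le> g (t y)" using y t_near_p[OF y False] unfolding Q_def g_def by simp
    have fp: "f p = 0" unfolding f_def by simp
    have g0: "0 \<le> g (t y)" unfolding g_def by (rule a_nonneg)
    have "e p y = max (d p y) \<bar>f p - f y\<bar>" using y p_in unfolding e_def by simp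
    also have "\<dots> = max (d p y) (g (t y))" unfolding fp fy using g0 by simp
    also have "\<dots> = g (t y)" using \<open>d p y \<le> g (t y)\<close> by simp
    finally have "e p y = g (t y)" .
    then show ?thesis unfolding g_def by blast
  qed
qed

lemma e_nonUP: "\<not> uniformly_perfect cantor_set e"
proof
  assume "uniformly_perfect cantor_set e"
  then obtain c where c: "0 < c" "c < 1" "c_uniformly_perfect c cantor_set e"
    unfolding uniformly_perfect_def by blast
  obtain j where j: "a (Suc j) < c * (a j / 2)" using a_ratio[OF c(1)] by blast
  define r where "r = a j / 2"
  have r: "0 < r" "r < a j" unfolding r_def using a_pos[of j] by auto
  define y1 where "y1 = cs (\<lambda>k. k = 0)"
  have y1: "y1 \<in> cantor_set" "y1 \<noteq> p"
  proof -
    show "y1 \<in> cantor_set" unfolding y1_def by simp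
    show "y1 \<noteq> p"
    proof
      assume "y1 = p"
      then have "(\<lambda>k::nat. k = 0) = (\<lambda>_. False)" unfolding y1_def p_def by (rule injD[OF inj_cs])
      then have "(0::nat) = 0 \<longleftrightarrow> False" by (rule fun_cong)
      then show False by simp
    qed
  qed
  have "t y1 = 0" unfolding t_def y1_def by simp
  then have "f y1 = a 0" using y1 N_pos unfolding f_def by simp
  then have "a 0 \<le> e p y1" using y1 p_in unfolding e_def f_def by simp
  then have "r < e p y1" using r a_anti[of 0 j] by linarith
  then have "ereal r < mdiam cantor_set e"
    using mdiam_ge[OF p_in y1(1), of e] unfolding less_ereal.simps(1)[symmetric]
    by (rule order.strict_trans2)
  then obtain y where y: "y \<in> cantor_set" "c * r \<le> e p y" "e p y \<le> r"
    using c(3) r(1) p_in unfolding c_uniformly_perfect_def by blast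
  have cr: "0 < c * r" using c r by simp
  from e_p_values[OF y(1)] show False
  proof (elim disjE exE)
    assume "e p y = 0" then show False using y cr by simp
  next
    assume "a 0 \<le> e p y" then show False using y r a_anti[of 0 j] by linarith
  next
    fix i assume i: "e p y = a i"
    show False
    proof (cases "i \<le> j")
      case True then show False using a_anti[OF True] i y r by linarith
    next
      case False
      then have "a i \<le> a (Suc j)" by (intro a_anti) simp
      then show False using i y j unfolding r_def by linarith
    qed
  qed
qed

end

lemma nonUP_dense:
  assumes d: "d \<in> Met cantor_set" and \<epsilon>: "\<epsilon> > 0"
  shows "\<exists>e\<in>Met cantor_set. \<not> uniformly_perfect cantor_set e \<and> DX cantor_set d e < ereal \<epsilon>"
proof -
  interpret nup d \<epsilon> using d \<epsilon> by unfold_locales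
  show ?thesis using e_Met e_nonUP e_DX by blast
qed

lemma dense_gen:
  assumes H: "\<And>d \<epsilon>. d \<in> Met cantor_set \<Longrightarrow> \<epsilon> > 0 \<Longrightarrow> \<exists>e\<in>Met cantor_set. P e \<and> DX cantor_set d e < ereal \<epsilon>"
  shows "Met_topology cantor_set closure_of {d \<in> Met cantor_set. P d} = topspace (Met_topology cantor_set)"
  unfolding dense_intersects_open
proof (intro allI impI)
  fix T assume T: "openin (Met_topology cantor_set) T \<and> T \<noteq> {}"
  then obtain d where d: "d \<in> T" by blast
  have MT: "Met_open cantor_set T" using T openin_Met_topology by blast
  then have dM: "d \<in> Met cantor_set" using d unfolding Met_open_def by blast
  obtain \<epsilon> where \<epsilon>: "\<epsilon> > 0" "\<forall>e\<in>Met cantor_set. DX cantor_set d e < ereal \<epsilon> \<longrightarrow> e \<in> T"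
    using MT d unfolding Met_open_def by blast
  obtain e where e: "e \<in> Met cantor_set" "P e" "DX cantor_set d e < ereal \<epsilon>" using H[OF dM \<epsilon>(1)] by blast
  then have "e \<in> T" using \<epsilon>(2) by blast
  then show "{d \<in> Met cantor_set. P d} \<inter> T \<noteq> {}" using e by blast
qed

theorem theorem1p5:
  shows "(fsigma_in (Met_topology cantor_set) {d \<in> Met cantor_set. uniformly_perfect cantor_set d}
          \<and> Met_topology cantor_set closure_of {d \<in> Met cantor_set. uniformly_perfect cantor_set d}
              = topspace (Met_topology cantor_set))
       \<and> (gdelta_in (Met_topology cantor_set) {d \<in> Met cantor_set. \<not> uniformly_perfect cantor_set d}
          \<and> Met_topology cantor_set closure_of {d \<in> Met cantor_set. \<not> uniformly_perfect cantor_set d}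
              = topspace (Met_topology cantor_set))"
proof (intro conjI)
  show "fsigma_in (Met_topology cantor_set) {d \<in> Met cantor_set. uniformly_perfect cantor_set d}"
    by (rule fsigma_UP)
  show "gdelta_in (Met_topology cantor_set) {d \<in> Met cantor_set. \<not> uniformly_perfect cantor_set d}"
    by (rule gdelta_nonUP)
  show "Met_topology cantor_set closure_of {d \<in> Met cantor_set. uniformly_perfect cantor_set d}
              = topspace (Met_topology cantor_set)"
    by (rule dense_gen) (rule UP_dense)
  show "Met_topology cantor_set closure_of {d \<in> Met cantor_set. \<not> uniformly_perfect cantor_set d}
              = topspace (Met_topology cantor_set)"
    by (rule dense_gen) (rule nonUP_dense)
qed

end
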